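(* Let $E$ be a finite directed graph with no sinks. If $F$ is either an out-split or a balanced in-split of $E$, then the adjacency matrices of $E$ and $F$ are unitally shift equivalent.
   Context: A sink is a vertex emitting no edges. A rectangular $\{0,1\}$-matrix $D$ is a division matrix if every row contains at least one $1$ and every column contains exactly one $1$. With $A$ the adjacency matrix of $E$ and $B$ that of $F$: $F$ is an out-split of $E$ if there are a division matrix $D$ and an $\mathbb{N}$-matrix $M$ with $A=DM$, $B=MD$; $F$ is a balanced in-split of $E$ if there are a division matrix $D$ and rectangular $\mathbb{N}$-matrices $R_A,R_B$ with $A=D^tR_A$, $B=D^tR_B$ and $R_AD^t=R_BD^t$. Two square $\mathbb{N}$-matrices $A,B$ are shift equivalent if there are an integer $\ell\ge1$ and rectangular $\mathbb{N}$-matrices $R,S$ with $A^\ell=RS$, $B^\ell=SR$, $AR=RB$, $BS=SA$. Such a shift equivalence $(R,S)$ is unital if there are $m,k\in\mathbb{N}$ with $(B^t)^mR^t\underline{1}=(B^t)^{m+k}\underline{1}$, where $\underline1$ is the all-ones column vector. $A$ and $B$ are unitally shift equivalent if a unital shift equivalence from $A$ to $B$ exists. *)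

theory Defs
  imports "Jordan_Normal_Form.Matrix"
begin

text \<open>Finite directed (multi)graphs are represented by their adjacency matrices,
  square matrices over nat: entry (i,j) is the number of edges from vertex i to vertex j.\<close>

definition no_sinks :: "nat mat \<Rightarrow> bool" where
  "no_sinks A \<longleftrightarrow> (\<forall>i < dim_row A. \<exists>j < dim_col A. A $$ (i, j) \<noteq> 0)"

definition division_mat :: "nat mat \<Rightarrow> bool" where
  "division_mat D \<longleftrightarrow>
     (\<forall>i < dim_row D. \<forall>j < dim_col D. D $$ (i, j) \<in> {0, 1}) \<and>
     (\<forall>i < dim_row D. \<exists>j < dim_col D. D $$ (i, j) = 1) \<and>
     (\<forall>j < dim_col D. \<exists>!i. i < dim_row D \<and> D $$ (i, j) = 1)"

definition out_split :: "nat mat \<Rightarrow> nat mat \<Rightarrow> bool" where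
  "out_split A B \<longleftrightarrow> (\<exists>D M. division_mat D \<and> M \<in> carrier_mat (dim_col D) (dim_row D)
      \<and> A = D * M \<and> B = M * D)"

definition balanced_in_split :: "nat mat \<Rightarrow> nat mat \<Rightarrow> bool" where
  "balanced_in_split A B \<longleftrightarrow> (\<exists>D RA RB. division_mat D
      \<and> RA \<in> carrier_mat (dim_row D) (dim_col D) \<and> RB \<in> carrier_mat (dim_row D) (dim_col D)
      \<and> A = D\<^sup>T * RA \<and> B = D\<^sup>T * RB \<and> RA * D\<^sup>T = RB * D\<^sup>T)"

definition shift_equiv_via :: "nat mat \<Rightarrow> nat mat \<Rightarrow> nat \<Rightarrow> nat mat \<Rightarrow> nat mat \<Rightarrow> bool" where
  "shift_equiv_via A B l R S \<longleftrightarrow> l \<ge> 1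
     \<and> R \<in> carrier_mat (dim_row A) (dim_row B) \<and> S \<in> carrier_mat (dim_row B) (dim_row A)
     \<and> A ^\<^sub>m l = R * S \<and> B ^\<^sub>m l = S * R \<and> A * R = R * B \<and> B * S = S * A"

definition unital_shift_equiv :: "nat mat \<Rightarrow> nat mat \<Rightarrow> bool" where
  "unital_shift_equiv A B \<longleftrightarrow> (\<exists>l R S. shift_equiv_via A B l R S \<and>
     (\<exists>m k. ((B\<^sup>T ^\<^sub>m m) * R\<^sup>T) *\<^sub>v (vec (dim_row A) (\<lambda>_. 1))
            = (B\<^sup>T ^\<^sub>m (m + k)) *\<^sub>v (vec (dim_row B) (\<lambda>_. 1))))"

end

theory Submission
  imports Defs
begin

lemma colsum_division:
  assumes "division_mat D" "j < dim_col D"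
  shows "(\<Sum>i<dim_row D. D $$ (i, j)) = 1"
proof -
  from assms obtain i0 where i0: "i0 < dim_row D" "D $$ (i0, j) = 1"
    and u: "\<And>i. i < dim_row D \<Longrightarrow> D $$ (i, j) = 1 \<Longrightarrow> i = i0"
    unfolding division_mat_def by metis
  have z: "\<And>i. i < dim_row D \<Longrightarrow> i \<noteq> i0 \<Longrightarrow> D $$ (i, j) = 0"
    using assms u unfolding division_mat_def by blast
  have "(\<Sum>i<dim_row D. D $$ (i, j)) = (\<Sum>i\<in>{i0}. D $$ (i, j))"
    by (rule sum.mono_neutral_right) (use i0 z in auto)
  then show ?thesis using i0 by simp
qed

lemma out_case:
  assumes "out_split A B"
  shows "unital_shift_equiv A B"
proof -
  from assms obtain D M where D: "division_mat D" and M: "M \<in> carrier_mat (dim_col D) (dim_row D)"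
    and A: "A = D * M" and B: "B = M * D" unfolding out_split_def by blast
  define p q where "p = dim_row D" "q = dim_col D"
  have Dc: "D \<in> carrier_mat p q" using p_q_def by auto
  have Mc: "M \<in> carrier_mat q p" using M p_q_def by auto
  have Ac: "A \<in> carrier_mat p p" using A Dc Mc by simp
  have Bc: "B \<in> carrier_mat q q" using B Dc Mc by simp
  have A1: "A ^\<^sub>m 1 = A" using Ac by simp
  have B1: "B ^\<^sub>m 1 = B" using Bc by simp
  have c1: "A * D = D * B" unfolding A B using assoc_mult_mat[OF Dc Mc Dc] .
  have c2: "B * M = M * A" unfolding A B using assoc_mult_mat[OF Mc Dc Mc] .
  have se: "shift_equiv_via A B 1 D M"
    unfolding shift_equiv_via_def using A1 B1 c1 c2 Dc Mc A B by simp
  have v: "D\<^sup>T *\<^sub>v vec (dim_row A) (\<lambda>_. 1) = vec q (\<lambda>_. 1)"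
  proof
    show "dim_vec (D\<^sup>T *\<^sub>v vec (dim_row A) (\<lambda>_. 1)) = dim_vec (vec q (\<lambda>_. 1))"
      using p_q_def by simp
    fix j assume "j < dim_vec (vec q (\<lambda>_. 1::nat))"
    then have j: "j < q" by simp
    have "(D\<^sup>T *\<^sub>v vec (dim_row A) (\<lambda>_. 1)) $ j = (\<Sum>i<p. D $$ (i, j))"
    proof -
      have rA: "dim_row A = p" using Ac by simp
      have "(D\<^sup>T *\<^sub>v vec p (\<lambda>_. 1)) $ j = (\<Sum>i<p. D $$ (i, j) * 1)"
        using j Dc by (simp add: mult_mat_vec_def scalar_prod_def lessThan_atLeast0 row_transpose col_def)
      then show ?thesis using rA by simp
    qed
    also have "\<dots> = 1" using colsum_division[OF D] j p_q_def by simp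
    finally show "(D\<^sup>T *\<^sub>v vec (dim_row A) (\<lambda>_. 1)) $ j = vec q (\<lambda>_. 1) $ j" using j by simp
  qed
  have "((B\<^sup>T ^\<^sub>m 0) * D\<^sup>T) *\<^sub>v vec (dim_row A) (\<lambda>_. 1)
        = (B\<^sup>T ^\<^sub>m (0 + 0)) *\<^sub>v vec (dim_row B) (\<lambda>_. 1)"
  proof -
    have "(B\<^sup>T ^\<^sub>m 0) * D\<^sup>T = D\<^sup>T" using Bc Dc by simp
    moreover have "(B\<^sup>T ^\<^sub>m (0 + 0)) *\<^sub>v vec (dim_row B) (\<lambda>_. 1) = vec q (\<lambda>_. 1)" using Bc by simp
    ultimately show ?thesis using v by simp
  qed
  then show ?thesis unfolding unital_shift_equiv_def using se by blast
qed

lemma in_case: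
  assumes "balanced_in_split A B"
  shows "unital_shift_equiv A B"
proof -
  from assms obtain D RA RB where D: "division_mat D"
    and RAc: "RA \<in> carrier_mat (dim_row D) (dim_col D)" and RBc: "RB \<in> carrier_mat (dim_row D) (dim_col D)"
    and A: "A = D\<^sup>T * RA" and B: "B = D\<^sup>T * RB" and X: "RA * D\<^sup>T = RB * D\<^sup>T"
    unfolding balanced_in_split_def by blast
  define p q where "p = dim_row D" "q = dim_col D"
  have Tc: "D\<^sup>T \<in> carrier_mat q p" using p_q_def by auto
  have RA': "RA \<in> carrier_mat p q" using RAc p_q_def by auto
  have RB': "RB \<in> carrier_mat p q" using RBc p_q_def by auto
  have Ac: "A \<in> carrier_mat q q" using A Tc RA' by simp
  have Bc: "B \<in> carrier_mat q q" using B Tc RB' by simp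
  have AB: "A * B = B * B"
  proof -
    have "A * B = D\<^sup>T * (RA * D\<^sup>T * RB)" unfolding A B
      using Tc RA' RB' by (simp add: assoc_mult_mat[of _ q p _ q _ q])
    also have "\<dots> = D\<^sup>T * (RB * D\<^sup>T * RB)" using X by simp
    also have "\<dots> = B * B" unfolding B
      using Tc RA' RB' by (simp add: assoc_mult_mat[of _ q p _ q _ q])
    finally show ?thesis .
  qed
  have BA: "B * A = A * A"
  proof -
    have "B * A = D\<^sup>T * (RB * D\<^sup>T * RA)" unfolding A B
      using Tc RA' RB' by (simp add: assoc_mult_mat[of _ q p _ q _ q])
    also have "\<dots> = D\<^sup>T * (RA * D\<^sup>T * RA)" using X by simp
    also have "\<dots> = A * A" unfolding A
      using Tc RA' RB' by (simp add: assoc_mult_mat[of _ q p _ q _ q])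
    finally show ?thesis .
  qed
  have A2: "A ^\<^sub>m 2 = A * A" using Ac by (simp add: numeral_2_eq_2)
  have B2: "B ^\<^sub>m 2 = B * B" using Bc by (simp add: numeral_2_eq_2)
  have se: "shift_equiv_via A B 2 B A"
    unfolding shift_equiv_via_def using A2 B2 AB BA Ac Bc by simp
  have "((B\<^sup>T ^\<^sub>m 0) * B\<^sup>T) *\<^sub>v vec (dim_row A) (\<lambda>_. 1)
        = (B\<^sup>T ^\<^sub>m (0 + 1)) *\<^sub>v vec (dim_row B) (\<lambda>_. 1)"
    using Ac Bc by simp
  then show ?thesis unfolding unital_shift_equiv_def using se by blast
qed

theorem corollary4p2:
  fixes A B :: "nat mat" and n :: nat
  assumes "A \<in> carrier_mat n n"
    and "no_sinks A"
    and "out_split A B \<or> balanced_in_split A B"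
  shows "unital_shift_equiv A B"
  using assms(3) out_case in_case by blast

end
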